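(* In the coordinates $[z_0,z_1,z_2,z_3,x]$, the four points $\mathbf p_1,\dots,\mathbf p_4$, namely $[-1,0,1,0,0]$, $[0,-1,0,1,0]$, $[0,1,0,1,0]$, $[1,0,1,0,0]$, are singular points of every curve $HC_F(\mathbf v,d)$, $[\mathbf v,d]\in\mathbb{C}P^4$. The four points $[0,0,1,1,\sqrt{-1}]$, $[0,0,1,1,-\sqrt{-1}]$, $[0,0,1,-1,\sqrt{-1}]$, $[0,0,1,-1,-\sqrt{-1}]$ are not singular points of $HC_F(\mathbf v,d)$ if $v_{j1}^2+v_{j2}^2\neq 0$ for $j=1$ or for $j=2$. Consequently, for generic $[\mathbf v,d]$ the only singular points of $HC_F(\mathbf v,d)$ are $\mathbf p_1,\mathbf p_2,\mathbf p_3,\mathbf p_4$; moreover the conditions defining this generic set include that $v_{j1}^2+v_{j2}^2\neq0$ for $j=1$ or for $j=2$.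
   Context: On $\mathbb{C}P^4$ use homogeneous coordinates $[z_0,z_1,z_2,z_3,x]$. For parameters $[\mathbf v,d]=[v_{11},v_{12},v_{21},v_{22},d]\in\mathbb{C}P^4$ (complex, not all zero), $HC_F(\mathbf v,d)$ is the subvariety of $\mathbb{C}P^4$ defined by the three quadrics $z_2^2-z_0^2-(z_3^2-z_1^2)=0$, $x^2+z_2^2-z_0^2=0$, and $(v_{22}z_0-v_{12}z_1)x+v_{21}z_0z_3-v_{11}z_1z_2-dz_0z_1=0$. (These coordinates relate to coordinates $[u,y_1,y_2,r_1,r_2]$ by $z_0=4r_1$, $z_1=4r_2$, $z_2=4(u-y_1)$, $z_3=-4(u+y_1)$, $x=-4y_2$; then the first two quadrics cut out the surface $\{(u-y_1)^2+y_2^2=r_1^2,\ (u+y_1)^2+y_2^2=r_2^2\}$.) A point of $HC_F(\mathbf v,d)$ is singular if the $3\times5$ Jacobian matrix of these three defining polynomials has rank less than $3$ there. "For generic $[\mathbf v,d]$" means: for all $[\mathbf v,d]$ in some nonempty Zariski-open subset of the parameter space $\mathbb{C}P^4$ (the complement of the common zero set of finitely many homogeneous polynomials in $v_{11},v_{12},v_{21},v_{22},d$). *)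

theory Defs
  imports "HOL-Analysis.Analysis"
begin

text \<open>Points of CP^4 are represented by nonzero vectors in complex^5 (coordinates
  z$1 = z_0, z$2 = z_1, z$3 = z_2, z$4 = z_3, z$5 = x); parameters [v,d] likewise
  by nonzero w :: complex^5 with w$1 = v11, w$2 = v12, w$3 = v21, w$4 = v22, w$5 = d.\<close>

definition quadF1 :: "complex^5 \<Rightarrow> complex" where
  "quadF1 z = (z$3)^2 - (z$1)^2 - ((z$4)^2 - (z$2)^2)"

definition quadF2 :: "complex^5 \<Rightarrow> complex" where
  "quadF2 z = (z$5)^2 + (z$3)^2 - (z$1)^2"

definition quadF3 :: "complex^5 \<Rightarrow> complex^5 \<Rightarrow> complex" where
  "quadF3 w z = (w$4 * z$1 - w$2 * z$2) * z$5 + w$3 * z$1 * z$4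
                 - w$1 * z$2 * z$3 - w$5 * z$1 * z$2"

text \<open>The curve HC_F(v,d), as the set of nonzero representatives of its points.\<close>
definition HCF :: "complex^5 \<Rightarrow> (complex^5) set" where
  "HCF w = {z. z \<noteq> 0 \<and> quadF1 z = 0 \<and> quadF2 z = 0 \<and> quadF3 w z = 0}"

definition jacHC :: "complex^5 \<Rightarrow> complex^5 \<Rightarrow> complex^5^3" where
  "jacHC w z = vector [
     vector [-2 * z$1, 2 * z$2, 2 * z$3, -2 * z$4, 0],
     vector [-2 * z$1, 0, 2 * z$3, 0, 2 * z$5],
     vector [w$4 * z$5 + w$3 * z$4 - w$5 * z$2,
             - w$2 * z$5 - w$1 * z$3 - w$5 * z$1,
             - w$1 * z$2,
             w$3 * z$1,
             w$4 * z$1 - w$2 * z$2]]"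

definition singular_pt :: "complex^5 \<Rightarrow> complex^5 \<Rightarrow> bool" where
  "singular_pt w z \<longleftrightarrow> z \<in> HCF w \<and> rank (jacHC w z) < 3"

definition proj_eq :: "complex^5 \<Rightarrow> complex^5 \<Rightarrow> bool" where
  "proj_eq z z' \<longleftrightarrow> (\<exists>c. c \<noteq> 0 \<and> z' = c *s z)"

definition hom_poly :: "nat \<Rightarrow> (complex^5 \<Rightarrow> complex) \<Rightarrow> bool" where
  "hom_poly k p \<longleftrightarrow> (\<exists>S c. finite S \<and> (\<forall>e\<in>S. (\<Sum>i\<in>UNIV. e i) = k) \<and>
      (\<forall>w. p w = (\<Sum>e\<in>S. c e * (\<Prod>i\<in>UNIV. (w$i) ^ e (i::5)))))"

text \<open>A property holds for generic [v,d]: it holds on a nonempty Zariski-open subset of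
  CP^4, the complement of the common zero set of finitely many homogeneous polynomials.\<close>
definition generic_param :: "(complex^5 \<Rightarrow> bool) \<Rightarrow> bool" where
  "generic_param Q \<longleftrightarrow> (\<exists>P. finite P \<and> (\<forall>p\<in>P. \<exists>k. hom_poly k p) \<and>
      (\<exists>w. w \<noteq> 0 \<and> (\<exists>p\<in>P. p w \<noteq> 0)) \<and>
      (\<forall>w. w \<noteq> 0 \<and> (\<exists>p\<in>P. p w \<noteq> 0) \<longrightarrow> Q w))"

definition sing_pts :: "(complex^5) list" where
  "sing_pts = [vector [-1,0,1,0,0], vector [0,-1,0,1,0], vector [0,1,0,1,0], vector [1,0,1,0,0]]"

definition other_pts :: "(complex^5) list" where
  "other_pts = [vector [0,0,1,1,\<i>], vector [0,0,1,1,-\<i>], vector [0,0,1,-1,\<i>], vector [0,0,1,-1,-\<i>]]"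

end

theory Submission
  imports Defs
begin


lemma sq_eq_neg: "(a::complex)^2 = - (b^2) \<Longrightarrow> b \<noteq> 0 \<Longrightarrow> (c * b + d * a = 0) \<Longrightarrow> c^2 + d^2 = 0"
proof -
  assume h: "a^2 = - (b^2)" "b \<noteq> 0" "c * b + d * a = 0"
  have "c * b = - d * a" using h(3) by (simp add: algebra_simps) (metis add.commute add_eq_0_iff2 minus_mult_left)
  then have "c^2 * b^2 = d^2 * a^2" by (metis power_mult_distrib mult_minus_left power2_eq_square  minus_mult_minus)
  then have "c^2 * b^2 = - (d^2 * b^2)" using h(1) by simp
  then have "(c^2 + d^2) * b^2 = 0" by (simp add: algebra_simps)
  then show ?thesis using h(2) by simp
qed

lemma core_alg:
  fixes z0 z1 z2 z3 x w1 w2 w3 w4 w5 a b :: complex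
  assumes C1: "z0^2 = z2^2 + x^2" and C2: "z1^2 = z3^2 + x^2"
    and Q3: "(w4 * z0 - w2 * z1) * x + w3 * z0 * z3 - w1 * z1 * z2 - w5 * z0 * z1 = 0"
    and E0: "a * (-2*z0) + b * (-2*z0) + (w4 * x + w3 * z3 - w5 * z1) = 0"
    and E1: "a * (2*z1) + (- w2 * x - w1 * z2 - w5 * z0) = 0"
    and E2: "a * (2*z2) + b * (2*z2) + (- w1 * z1) = 0"
    and E3: "a * (-2*z3) + w3 * z0 = 0"
    and N1: "w1^2 + w2^2 \<noteq> 0" and N2: "w3^2 + w4^2 \<noteq> 0"
    and Dl: "((w3-w5)^2 - w1^2) * ((w3+w5)^2 - w1^2) \<noteq> 0"
    and Dd: "(w5^2 - (w1^2+w2^2) - (w3^2+w4^2))^2 - 4*(w1^2+w2^2)*(w3^2+w4^2) \<noteq> 0"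
  shows "(z1 = 0 \<and> z3 = 0 \<and> x = 0) \<or> (z0 = 0 \<and> z2 = 0 \<and> x = 0)"
proof (cases "x = 0")
  case True
  have "z0^2 = z2^2" using C1 True by simp
  then have s2: "z2 = z0 \<or> z2 = - z0" by (auto simp: power2_eq_iff)
  have "z1^2 = z3^2" using C2 True by simp
  then have s3: "z3 = z1 \<or> z3 = - z1" by (auto simp: power2_eq_iff)
  have Q: "w3 * z0 * z3 - w1 * z1 * z2 - w5 * z0 * z1 = 0" using Q3 True by simp
  have eqD: "((w3-w5)^2 - w1^2) * ((w3+w5)^2 - w1^2) = (w3-w1-w5)*(w3+w1-w5)*(-w3+w1-w5)*(-w3-w1-w5)"
    by (simp add: algebra_simps power2_eq_square)
  have f1: "w3-w1-w5 \<noteq> 0" and f2: "w3+w1-w5 \<noteq> 0" and f3: "-w3+w1-w5 \<noteq> 0" and f4: "-w3-w1-w5 \<noteq> 0"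
    using Dl unfolding eqD by auto
  have "z0 * z1 = 0"
  proof (cases "z2 = z0")
    case a: True
    show ?thesis
    proof (cases "z3 = z1")
      case True
      have "z0 * z1 * (w3-w1-w5) = 0" using Q a True by (simp add: algebra_simps)
      then show ?thesis using f1 by simp
    next
      case False
      then have b: "z3 = - z1" using s3 by simp
      have "z0 * z1 * (-w3-w1-w5) = 0" using Q a b by (simp add: algebra_simps)
      then show ?thesis using f4 by simp
    qed
  next
    case False
    then have a: "z2 = - z0" using s2 by simp
    show ?thesis
    proof (cases "z3 = z1")
      case True
      have "z0 * z1 * (w3+w1-w5) = 0" using Q a True by (simp add: algebra_simps)
      then show ?thesis using f2 by simp
    next
      case False
      then have b: "z3 = - z1" using s3 by simp
      have "z0 * z1 * (-w3+w1-w5) = 0" using Q a b by (simp add: algebra_simps)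
      then show ?thesis using f3 by simp
    qed
  qed
  then have "z0 = 0 \<or> z1 = 0" by simp
  then show ?thesis using s2 s3 True by auto
next
  case xnz: False
  show ?thesis
  proof (cases "z0 = 0")
    case z0: True
    then have s2: "z2^2 = - (x^2)" using C1 by (simp add: eq_neg_iff_add_eq_0)
    show ?thesis
    proof (cases "z1 = 0")
      case True
      then have s3: "z3^2 = - (x^2)" using C2 by (simp add: eq_neg_iff_add_eq_0)
      have "w4 * x + w3 * z3 = 0" using E0 z0 True by simp
      then have "w4^2 + w3^2 = 0" using sq_eq_neg[OF s3 xnz] by simp
      then show ?thesis using N2 by (simp add: add.commute)
    next
      case False
      have "- (z1 * (w2 * x + w1 * z2)) = (w4 * z0 - w2 * z1) * x + w3 * z0 * z3 - w1 * z1 * z2 - w5 * z0 * z1"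
        using z0 by (simp add: algebra_simps)
      then have "z1 * (w2 * x + w1 * z2) = 0" using Q3 by simp
      then have "w2 * x + w1 * z2 = 0" using False by simp
      then have "w2^2 + w1^2 = 0" using sq_eq_neg[OF s2 xnz] by simp
      then show ?thesis using N1 by (simp add: add.commute)
    qed
  next
    case z0nz: False
    show ?thesis
    proof (cases "z1 = 0")
      case True
      then have s3: "z3^2 = - (x^2)" using C2 by (simp add: eq_neg_iff_add_eq_0)
      have "z0 * (w4 * x + w3 * z3) = (w4 * z0 - w2 * z1) * x + w3 * z0 * z3 - w1 * z1 * z2 - w5 * z0 * z1"
        using True by (simp add: algebra_simps)
      then have "z0 * (w4 * x + w3 * z3) = 0" using Q3 by simp
      then have "w4 * x + w3 * z3 = 0" using z0nz by simp
      then have "w4^2 + w3^2 = 0" using sq_eq_neg[OF s3 xnz] by simp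
      then show ?thesis using N2 by (simp add: add.commute)
    next
      case z1nz: False
      have T1: "z2 * (w4 * x + w3 * z3 - w5 * z1) - w1 * z0 * z1 = 0"
      proof -
        have "z2 * (w4 * x + w3 * z3 - w5 * z1) - w1 * z0 * z1
           = z2 * (a * (-2*z0) + b * (-2*z0) + (w4 * x + w3 * z3 - w5 * z1))
             + z0 * (a * (2*z2) + b * (2*z2) + (- w1 * z1))" by (simp add: algebra_simps)
        then show ?thesis using E0 E2 by simp
      qed
      have T2: "z3 * (- w2 * x - w1 * z2 - w5 * z0) + w3 * z0 * z1 = 0"
      proof -
        have "z3 * (- w2 * x - w1 * z2 - w5 * z0) + w3 * z0 * z1
           = z3 * (a * (2*z1) + (- w2 * x - w1 * z2 - w5 * z0)) + z1 * (a * (-2*z3) + w3 * z0)"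
          by (simp add: algebra_simps)
        then show ?thesis using E1 E3 by simp
      qed
      have "z1 * x * (w2 * z2 - w1 * x) = z0 * (z2 * (w4 * x + w3 * z3 - w5 * z1) - w1 * z0 * z1)
           - z2 * ((w4 * z0 - w2 * z1) * x + w3 * z0 * z3 - w1 * z1 * z2 - w5 * z0 * z1)
           + z1 * w1 * (z0^2 - z2^2 - x^2)"
        by (simp add: algebra_simps power2_eq_square)
      then have "z1 * x * (w2 * z2 - w1 * x) = 0" using T1 Q3 C1 by simp
      then have K1: "w1 * x = w2 * z2" using z1nz xnz by simp
      have "z0 * x * (w3 * x - w4 * z3) = z1 * (z3 * (- w2 * x - w1 * z2 - w5 * z0) + w3 * z0 * z1)
           - z3 * ((w4 * z0 - w2 * z1) * x + w3 * z0 * z3 - w1 * z1 * z2 - w5 * z0 * z1)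
           - z0 * w3 * (z1^2 - z3^2 - x^2)"
        by (simp add: algebra_simps power2_eq_square)
      then have "z0 * x * (w3 * x - w4 * z3) = 0" using T2 Q3 C2 by simp
      then have K2: "w3 * x = w4 * z3" using z0nz xnz by simp
      define l where "l = (w1 * z2 + w2 * x) / z0"
      define m where "m = (w3 * z3 + w4 * x) / z1"
      have "(w1 * z2 + w2 * x)^2 = (w1^2 + w2^2) * z0^2 - (w1 * x - w2 * z2)^2"
        using C1 by (simp add: algebra_simps power2_eq_square)
      then have "(w1 * z2 + w2 * x)^2 = (w1^2 + w2^2) * z0^2" using K1 by simp
      then have L: "l^2 = w1^2 + w2^2" using z0nz by (simp add: l_def power_divide)
      have "(w3 * z3 + w4 * x)^2 = (w3^2 + w4^2) * z1^2 - (w3 * x - w4 * z3)^2"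
        using C2 by (simp add: algebra_simps power2_eq_square)
      then have "(w3 * z3 + w4 * x)^2 = (w3^2 + w4^2) * z1^2" using K2 by simp
      then have M: "m^2 = w3^2 + w4^2" using z1nz by (simp add: m_def power_divide)
      have "z0 * z1 * (m - l - w5) = (w4 * z0 - w2 * z1) * x + w3 * z0 * z3 - w1 * z1 * z2 - w5 * z0 * z1"
        using z0nz z1nz by (simp add: l_def m_def field_simps)
      then have W: "w5 = m - l" using Q3 z0nz z1nz by simp
      have "(w5^2 - (w1^2+w2^2) - (w3^2+w4^2))^2 - 4*(w1^2+w2^2)*(w3^2+w4^2) = 0"
        unfolding W L[symmetric] M[symmetric] by (simp add: algebra_simps power2_eq_square)
      then show ?thesis using Dd by simp
    qed
  qed
qed



lemma hp_const: "hom_poly 0 (\<lambda>w. c)"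
  unfolding hom_poly_def
  by (rule exI[of _ "{\<lambda>i. 0}"], rule exI[of _ "\<lambda>_. c"]) simp

lemma hp_var: "hom_poly 1 (\<lambda>w. w$j)"
  unfolding hom_poly_def
proof (rule exI[of _ "{\<lambda>i. if i = j then 1 else 0}"], rule exI[of _ "\<lambda>_. 1"], intro conjI allI ballI)
  fix w :: "complex^5"
  have "(\<Prod>i\<in>UNIV. (w$i) ^ (if i = j then 1 else 0)) = (\<Prod>i\<in>UNIV. if i = j then w$i else 1)"
    by (rule prod.cong) auto
  also have "\<dots> = w$j" by simp
  finally show "w $ j = (\<Sum>e\<in>{\<lambda>i. if i = j then 1 else 0}. 1 * (\<Prod>i\<in>UNIV. w $ i ^ e i))" by simp
qed auto

lemma hp_add: "hom_poly k p \<Longrightarrow> hom_poly k q \<Longrightarrow> hom_poly k (\<lambda>w. p w + q w)"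
proof -
  assume hp: "hom_poly k p" and hq: "hom_poly k q"
  obtain S1 c1 where S1: "finite S1 \<and> (\<forall>e\<in>S1. (\<Sum>i\<in>UNIV. e i) = k) \<and> (\<forall>w. p w = (\<Sum>e\<in>S1. c1 e * (\<Prod>i\<in>UNIV. (w$i) ^ e (i::5))))"
    using hp unfolding hom_poly_def by blast
  obtain S2 c2 where S2: "finite S2 \<and> (\<forall>e\<in>S2. (\<Sum>i\<in>UNIV. e i) = k) \<and> (\<forall>w. q w = (\<Sum>e\<in>S2. c2 e * (\<Prod>i\<in>UNIV. (w$i) ^ e (i::5))))"
    using hq unfolding hom_poly_def by blast
  define c where "c e = (if e \<in> S1 then c1 e else 0) + (if e \<in> S2 then c2 e else 0)" for e
  show ?thesis unfolding hom_poly_def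
  proof (rule exI[of _ "S1 \<union> S2"], rule exI[of _ c], intro conjI allI)
    show "finite (S1 \<union> S2)" using S1 S2 by simp
    show "\<forall>e\<in>S1 \<union> S2. (\<Sum>i\<in>UNIV. e i) = k" using S1 S2 by blast
    fix w :: "complex^5"
    define m where "m e = (\<Prod>i\<in>UNIV. (w$i) ^ e (i::5))" for e :: "5 \<Rightarrow> nat"
    have f: "finite S1" "finite S2" using S1 S2 by auto
    have "(\<Sum>e\<in>S1 \<union> S2. c e * m e) = (\<Sum>e\<in>S1 \<union> S2. (if e \<in> S1 then c1 e * m e else 0)
        + (if e \<in> S2 then c2 e * m e else 0))"
      by (rule sum.cong) (simp_all add: c_def distrib_right)
    also have "\<dots> = (\<Sum>e\<in>S1 \<union> S2. (if e \<in> S1 then c1 e * m e else 0))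
        + (\<Sum>e\<in>S1 \<union> S2. (if e \<in> S2 then c2 e * m e else 0))"
      by (rule sum.distrib)
    also have "(\<Sum>e\<in>S1 \<union> S2. (if e \<in> S1 then c1 e * m e else 0)) = (\<Sum>e\<in>S1. c1 e * m e)"
      using f by (simp add: sum.inter_restrict[symmetric] Int_absorb1)
    also have "(\<Sum>e\<in>S1 \<union> S2. (if e \<in> S2 then c2 e * m e else 0)) = (\<Sum>e\<in>S2. c2 e * m e)"
      using f by (simp add: sum.inter_restrict[symmetric] Int_absorb1)
    finally have "(\<Sum>e\<in>S1 \<union> S2. c e * m e) = p w + q w"
      using S1 S2 by (simp add: m_def)
    then show "p w + q w = (\<Sum>e\<in>S1 \<union> S2. c e * (\<Prod>i\<in>UNIV. (w$i) ^ e (i::5)))"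
      by (simp add: m_def)
  qed
qed

lemma hp_mult: "hom_poly k p \<Longrightarrow> hom_poly l q \<Longrightarrow> m = k + l \<Longrightarrow> hom_poly m (\<lambda>w. p w * q w)"
proof -
  assume hp: "hom_poly k p" and hq: "hom_poly l q" and m: "m = k + l"
  obtain S1 c1 where S1': "finite S1 \<and> (\<forall>e\<in>S1. (\<Sum>i\<in>UNIV. e i) = k) \<and> (\<forall>w. p w = (\<Sum>e\<in>S1. c1 e * (\<Prod>i\<in>UNIV. (w$i) ^ e (i::5))))"
    using hp unfolding hom_poly_def by blast
  obtain S2 c2 where S2': "finite S2 \<and> (\<forall>e\<in>S2. (\<Sum>i\<in>UNIV. e i) = l) \<and> (\<forall>w. q w = (\<Sum>e\<in>S2. c2 e * (\<Prod>i\<in>UNIV. (w$i) ^ e (i::5))))"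
    using hq unfolding hom_poly_def by blast
  have S1: "finite S1" "\<forall>e\<in>S1. (\<Sum>i\<in>UNIV. e i) = k" "\<forall>w. p w = (\<Sum>e\<in>S1. c1 e * (\<Prod>i\<in>UNIV. (w$i) ^ e (i::5)))"
    using S1' by auto
  have S2: "finite S2" "\<forall>e\<in>S2. (\<Sum>i\<in>UNIV. e i) = l" "\<forall>w. q w = (\<Sum>e\<in>S2. c2 e * (\<Prod>i\<in>UNIV. (w$i) ^ e (i::5)))"
    using S2' by auto
  define g where "g = (\<lambda>(e::5\<Rightarrow>nat, f::5\<Rightarrow>nat). (\<lambda>i. e i + f i))"
  define c where "c h = (\<Sum>x\<in>{x\<in>S1 \<times> S2. g x = h}. c1 (fst x) * c2 (snd x))" for h
  show ?thesis unfolding hom_poly_def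
  proof (rule exI[of _ "g ` (S1 \<times> S2)"], rule exI[of _ c], intro conjI allI ballI)
    show "finite (g ` (S1 \<times> S2))" using S1 S2 by simp
    fix h assume "h \<in> g ` (S1 \<times> S2)"
    then obtain e f where "e \<in> S1" "f \<in> S2" "h = (\<lambda>i. e i + f i)" unfolding g_def by auto
    then show "(\<Sum>i\<in>UNIV. h i) = m" using S1 S2 m by (simp add: sum.distrib)
  next
    fix w :: "complex^5"
    let ?m = "\<lambda>e. (\<Prod>i\<in>UNIV. (w$i) ^ e (i::5))"
    have mm: "?m (g x) = ?m (fst x) * ?m (snd x)" for x
      unfolding g_def by (cases x) (simp add: power_add prod.distrib)
    have "p w * q w = (\<Sum>e\<in>S1. c1 e * ?m e) * (\<Sum>f\<in>S2. c2 f * ?m f)" using S1 S2 by simp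
    also have "\<dots> = (\<Sum>x\<in>S1 \<times> S2. (c1 (fst x) * ?m (fst x)) * (c2 (snd x) * ?m (snd x)))"
      by (simp add: sum_product sum.cartesian_product case_prod_beta)
    also have "\<dots> = (\<Sum>x\<in>S1 \<times> S2. c1 (fst x) * c2 (snd x) * ?m (g x))"
      by (rule sum.cong) (simp_all add: mm algebra_simps)
    also have "\<dots> = (\<Sum>h\<in>g ` (S1 \<times> S2). (\<Sum>x\<in>{x\<in>S1 \<times> S2. g x = h}. c1 (fst x) * c2 (snd x) * ?m (g x)))"
      using S1(1) S2(1) by (rule_tac sum.image_gen) simp
    also have "\<dots> = (\<Sum>h\<in>g ` (S1 \<times> S2). c h * ?m h)"
      unfolding c_def by (rule sum.cong) (simp_all add: sum_distrib_right)
    finally show "p w * q w = (\<Sum>h\<in>g ` (S1 \<times> S2). c h * ?m h)" .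
  qed
qed

lemma hp_smult: "hom_poly k p \<Longrightarrow> hom_poly k (\<lambda>w. c * p w)"
  using hp_mult[OF hp_const, of k p] by simp

lemma hp_uminus: "hom_poly k p \<Longrightarrow> hom_poly k (\<lambda>w. - p w)"
  using hp_smult[of k p "-1"] by simp

lemma hp_diff: "hom_poly k p \<Longrightarrow> hom_poly k q \<Longrightarrow> hom_poly k (\<lambda>w. p w - q w)"
  using hp_add[of k p "\<lambda>w. - q w"] hp_uminus[of k q] by simp

lemma hp_pow2: "hom_poly k p \<Longrightarrow> m = k + k \<Longrightarrow> hom_poly m (\<lambda>w. (p w)^2)"
  using hp_mult[of k p k p m] by (simp add: power2_eq_square)



lemma rows3: "rows (M::'a::field^'n^3) = {M$1, M$2, M$3}"
  unfolding rows_def row_def by (auto simp: vec_lambda_eta) (metis exhaust_3)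

lemma rank_lt3_dep:
  fixes M :: "complex^5^3"
  assumes "rank M < 3"
  shows "\<exists>a b c. (a \<noteq> 0 \<or> b \<noteq> 0 \<or> c \<noteq> 0) \<and> a *s M$1 + b *s M$2 + c *s M$3 = 0"
proof (rule ccontr)
  assume "\<not> ?thesis"
  then have H: "\<And>a b c. a *s M$1 + b *s M$2 + c *s M$3 = 0 \<Longrightarrow> a = 0 \<and> b = 0 \<and> c = 0" by blast
  have d12: "M$1 \<noteq> M$2" using H[of 1 "-1" 0] by auto
  have d13: "M$1 \<noteq> M$3" using H[of 1 0 "-1"] by auto
  have d23: "M$2 \<noteq> M$3" using H[of 0 1 "-1"] by auto
  have n3: "M$3 \<noteq> 0" using H[of 0 0 1] by auto
  have s23: "M$2 \<notin> vec.span {M$3}"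
  proof
    assume "M$2 \<in> vec.span {M$3}"
    then obtain k where "M$2 = k *s M$3" by (auto simp: vec.span_singleton)
    then show False using H[of 0 1 "-k"] by (simp add: algebra_simps)
  qed
  have s1: "M$1 \<notin> vec.span {M$2, M$3}"
  proof
    assume "M$1 \<in> vec.span {M$2, M$3}"
    then obtain k where "M$1 - k *s M$2 \<in> vec.span {M$3}" by (auto simp: vec.span_insert)
    then obtain k' where "M$1 - k *s M$2 = k' *s M$3" by (auto simp: vec.span_singleton)
    then show False using H[of 1 "-k" "-k'"] by (simp add: algebra_simps)
  qed
  have ind: "vec.independent {M$1, M$2, M$3}"
    using s1 s23 n3 d12 d13 d23 by (simp add: vec.independent_insert)
  have card: "card {M$1, M$2, M$3} = 3" using d12 d13 d23 by simp
  have rows: "rows M = {M$1, M$2, M$3}" by (rule rows3)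
  have "rank M = 3" unfolding row_rank_def_gen rows
    using vec.dim_eq_card_independent[OF ind] card by simp
  then show False using assms by simp
qed

lemma rank_le2:
  fixes M :: "complex^5^3"
  assumes "M$2 = M$1 \<or> M$2 = 0"
  shows "rank M < 3"
proof -
  have rows: "rows M = {M$1, M$2, M$3}" by (rule rows3)
  have "rows M \<subseteq> vec.span {M$1, M$3}"
    unfolding rows using assms by (auto intro: vec.span_base vec.span_zero)
  then have "rank M \<le> card {M$1, M$3}" unfolding row_rank_def_gen
    by (rule vec.dim_le_card) simp
  also have "\<dots> \<le> 2" by (simp add: card_insert_if)
  finally show ?thesis by simp
qed



lemma exhaust_5:
  fixes x :: 5
  shows "x = 1 \<or> x = 2 \<or> x = 3 \<or> x = 4 \<or> x = 5"
proof (induct x)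
  case (of_int z)
  then have "z = 0 \<or> z = 1 \<or> z = 2 \<or> z = 3 \<or> z = 4" by fastforce
  then show ?case by auto
qed

lemma vector_5 [simp]:
 "(vector [a,b,c,d,e] ::('a::zero)^5)$1 = a"
 "(vector [a,b,c,d,e] ::('a::zero)^5)$2 = b"
 "(vector [a,b,c,d,e] ::('a::zero)^5)$3 = c"
 "(vector [a,b,c,d,e] ::('a::zero)^5)$4 = d"
 "(vector [a,b,c,d,e] ::('a::zero)^5)$5 = e"
  unfolding vector_def by simp_all

lemma vec5_eq: "(u::'a^5) = v \<longleftrightarrow> u$1=v$1 \<and> u$2=v$2 \<and> u$3=v$3 \<and> u$4=v$4 \<and> u$5=v$5"
proof
  assume h: "u$1=v$1 \<and> u$2=v$2 \<and> u$3=v$3 \<and> u$4=v$4 \<and> u$5=v$5"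
  show "u = v" unfolding vec_eq_iff
  proof
    fix i :: 5
    from exhaust_5[of i] h show "u$i = v$i" by auto
  qed
qed simp

lemma jac_rows:
  "jacHC w z $ 1 = vector [-2 * z$1, 2 * z$2, 2 * z$3, -2 * z$4, 0]"
  "jacHC w z $ 2 = vector [-2 * z$1, 0, 2 * z$3, 0, 2 * z$5]"
  "jacHC w z $ 3 = vector [w$4 * z$5 + w$3 * z$4 - w$5 * z$2,
             - w$2 * z$5 - w$1 * z$3 - w$5 * z$1, - w$1 * z$2, w$3 * z$1, w$4 * z$1 - w$2 * z$2]"
  unfolding jacHC_def by simp_all

lemma jac_comp:
  assumes "a *s jacHC w z $ 1 + b *s jacHC w z $ 2 + c *s jacHC w z $ 3 = 0"
  shows "a * (-2 * z$1) + b * (-2 * z$1) + c * (w$4 * z$5 + w$3 * z$4 - w$5 * z$2) = 0"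
    "a * (2 * z$2) + c * (- w$2 * z$5 - w$1 * z$3 - w$5 * z$1) = 0"
    "a * (2 * z$3) + b * (2 * z$3) + c * (- w$1 * z$2) = 0"
    "a * (-2 * z$4) + c * (w$3 * z$1) = 0"
    "b * (2 * z$5) + c * (w$4 * z$1 - w$2 * z$2) = 0"
proof -
  have e: "(a *s jacHC w z $ 1 + b *s jacHC w z $ 2 + c *s jacHC w z $ 3) $ j = 0" for j
    using assms by simp
  show "a * (-2 * z$1) + b * (-2 * z$1) + c * (w$4 * z$5 + w$3 * z$4 - w$5 * z$2) = 0"
    using e[of 1] by (simp add: jac_rows)
  show "a * (2 * z$2) + c * (- w$2 * z$5 - w$1 * z$3 - w$5 * z$1) = 0"
    using e[of 2] by (simp add: jac_rows)
  show "a * (2 * z$3) + b * (2 * z$3) + c * (- w$1 * z$2) = 0"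
    using e[of 3] by (simp add: jac_rows)
  show "a * (-2 * z$4) + c * (w$3 * z$1) = 0"
    using e[of 4] by (simp add: jac_rows)
  show "b * (2 * z$5) + c * (w$4 * z$1 - w$2 * z$2) = 0"
    using e[of 5] by (simp add: jac_rows)
qed

lemma aux1: "(x::complex)^2 + a^2 - b^2 = 0 \<Longrightarrow> b^2 = a^2 + x^2"
proof -
  assume h: "x^2 + a^2 - b^2 = 0"
  have "b^2 - (a^2 + x^2) = - (x^2 + a^2 - b^2)" by (simp add: algebra_simps)
  with h have "b^2 - (a^2 + x^2) = 0" by simp
  then show ?thesis by simp
qed

lemma aux2: "(a::complex)^2 - b^2 - (c^2 - d^2) = 0 \<Longrightarrow> x^2 + a^2 - b^2 = 0 \<Longrightarrow> d^2 = c^2 + x^2"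
proof -
  assume h1: "a^2 - b^2 - (c^2 - d^2) = 0" and h2: "x^2 + a^2 - b^2 = 0"
  have "d^2 - (c^2 + x^2) = (a^2 - b^2 - (c^2 - d^2)) - (x^2 + a^2 - b^2)" by (simp add: algebra_simps)
  with h1 h2 have "d^2 - (c^2 + x^2) = 0" by simp
  then show ?thesis by simp
qed

lemma HCF_C:
  assumes "z \<in> HCF w"
  shows "z \<noteq> 0" "(z$1)^2 = (z$3)^2 + (z$5)^2" "(z$2)^2 = (z$4)^2 + (z$5)^2"
    "(w$4 * z$1 - w$2 * z$2) * z$5 + w$3 * z$1 * z$4 - w$1 * z$2 * z$3 - w$5 * z$1 * z$2 = 0"
proof -
  have h: "z \<noteq> 0" "quadF1 z = 0" "quadF2 z = 0" "quadF3 w z = 0" using assms by (auto simp: HCF_def)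
  show "z \<noteq> 0" by (rule h(1))
  show "(z$1)^2 = (z$3)^2 + (z$5)^2" using h(3) unfolding quadF2_def by (rule aux1)
  show "(z$2)^2 = (z$4)^2 + (z$5)^2" using h(2) h(3) unfolding quadF1_def quadF2_def by (rule aux2)
  show "(w$4 * z$1 - w$2 * z$2) * z$5 + w$3 * z$1 * z$4 - w$1 * z$2 * z$3 - w$5 * z$1 * z$2 = 0"
    using h(4) unfolding quadF3_def by simp
qed



lemma c0_case:
  fixes z0 z1 z2 z3 x a b :: complex
  assumes C2: "z1^2 = z3^2 + x^2" and ab: "a \<noteq> 0 \<or> b \<noteq> 0"
    and E0: "a * (-2 * z0) + b * (-2 * z0) = 0" and E1: "a * (2 * z1) = 0"
    and E2: "a * (2 * z2) + b * (2 * z2) = 0" and E3: "a * (-2 * z3) = 0" and E4: "b * (2 * x) = 0"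
  shows "(z1 = 0 \<and> z3 = 0 \<and> x = 0) \<or> (z0 = 0 \<and> z2 = 0 \<and> x = 0)"
proof (cases "a = 0")
  case True
  then have "b \<noteq> 0" using ab by simp
  then show ?thesis using E0 E2 E4 True by simp
next
  case False
  then have "z1 = 0" "z3 = 0" using E1 E3 by auto
  then have "x = 0" using C2 by simp
  then show ?thesis using \<open>z1 = 0\<close> \<open>z3 = 0\<close> by simp
qed

definition Dpoly :: "complex^5 \<Rightarrow> complex" where
  "Dpoly w = ((w$1)^2 + (w$2)^2) * ((w$3)^2 + (w$4)^2)
     * (((w$3 - w$5)^2 - (w$1)^2) * ((w$3 + w$5)^2 - (w$1)^2))
     * (((w$5)^2 - ((w$1)^2 + (w$2)^2) - ((w$3)^2 + (w$4)^2))^2 - 4 * ((w$1)^2 + (w$2)^2) * ((w$3)^2 + (w$4)^2))"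

lemma sing_to_p:
  assumes S: "singular_pt w z" and D: "Dpoly w \<noteq> 0"
  shows "(z$2 = 0 \<and> z$4 = 0 \<and> z$5 = 0) \<or> (z$1 = 0 \<and> z$3 = 0 \<and> z$5 = 0)"
proof -
  have H: "z \<in> HCF w" and R: "rank (jacHC w z) < 3" using S by (auto simp: singular_pt_def)
  note C = HCF_C[OF H]
  obtain a b c where abc: "a \<noteq> 0 \<or> b \<noteq> 0 \<or> c \<noteq> 0"
    and E: "a *s jacHC w z $ 1 + b *s jacHC w z $ 2 + c *s jacHC w z $ 3 = 0"
    using rank_lt3_dep[OF R] by blast
  note E' = jac_comp[OF E]
  show ?thesis
  proof (cases "c = 0")
    case True
    have "(z$2 = 0 \<and> z$4 = 0 \<and> z$5 = 0) \<or> (z$1 = 0 \<and> z$3 = 0 \<and> z$5 = 0)"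
    proof (rule c0_case[where a=a and b=b])
      show "(z$2)^2 = (z$4)^2 + (z$5)^2" by (rule C(3))
      show "a \<noteq> 0 \<or> b \<noteq> 0" using abc True by simp
    qed (use E' True in simp_all)
    then show ?thesis .
  next
    case cnz: False
    have D': "(w$1)^2 + (w$2)^2 \<noteq> 0" "(w$3)^2 + (w$4)^2 \<noteq> 0"
      "((w$3 - w$5)^2 - (w$1)^2) * ((w$3 + w$5)^2 - (w$1)^2) \<noteq> 0"
      "((w$5)^2 - ((w$1)^2 + (w$2)^2) - ((w$3)^2 + (w$4)^2))^2 - 4 * ((w$1)^2 + (w$2)^2) * ((w$3)^2 + (w$4)^2) \<noteq> 0"
      using D unfolding Dpoly_def by auto
    have F0: "(a/c) * (-2 * z$1) + (b/c) * (-2 * z$1) + (w$4 * z$5 + w$3 * z$4 - w$5 * z$2) = 0"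
    proof -
      have "c * ((a/c) * (-2 * z$1) + (b/c) * (-2 * z$1) + (w$4 * z$5 + w$3 * z$4 - w$5 * z$2))
          = a * (-2 * z$1) + b * (-2 * z$1) + c * (w$4 * z$5 + w$3 * z$4 - w$5 * z$2)"
        using cnz by (simp add: field_simps)
      then show ?thesis using E'(1) cnz by simp
    qed
    have F1: "(a/c) * (2 * z$2) + (- w$2 * z$5 - w$1 * z$3 - w$5 * z$1) = 0"
    proof -
      have "c * ((a/c) * (2 * z$2) + (- w$2 * z$5 - w$1 * z$3 - w$5 * z$1))
          = a * (2 * z$2) + c * (- w$2 * z$5 - w$1 * z$3 - w$5 * z$1)"
        using cnz by (simp add: field_simps)
      then show ?thesis using E'(2) cnz by simp
    qed
    have F2: "(a/c) * (2 * z$3) + (b/c) * (2 * z$3) + (- w$1 * z$2) = 0"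
    proof -
      have "c * ((a/c) * (2 * z$3) + (b/c) * (2 * z$3) + (- w$1 * z$2))
          = a * (2 * z$3) + b * (2 * z$3) + c * (- w$1 * z$2)"
        using cnz by (simp add: field_simps)
      then show ?thesis using E'(3) cnz by simp
    qed
    have F3: "(a/c) * (-2 * z$4) + w$3 * z$1 = 0"
    proof -
      have "c * ((a/c) * (-2 * z$4) + w$3 * z$1) = a * (-2 * z$4) + c * (w$3 * z$1)"
        using cnz by (simp add: field_simps)
      then show ?thesis using E'(4) cnz by simp
    qed
    show ?thesis
      using core_alg[OF C(2) C(3) C(4) F0 F1 F2 F3 D'] by auto
  qed
qed



lemma p_of:
  assumes H: "z \<in> HCF w"
    and Z: "(z$2 = 0 \<and> z$4 = 0 \<and> z$5 = 0) \<or> (z$1 = 0 \<and> z$3 = 0 \<and> z$5 = 0)"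
  shows "\<exists>p\<in>set sing_pts. proj_eq p z"
proof -
  note C = HCF_C[OF H]
  show ?thesis
  proof (cases "z$2 = 0 \<and> z$4 = 0 \<and> z$5 = 0")
    case True
    then have "(z$3)^2 = (z$1)^2" using C(2) by simp
    then have s: "z$3 = z$1 \<or> z$3 = - z$1" by (simp add: power2_eq_iff)
    have nz: "z$1 \<noteq> 0" using C(1) True s by (auto simp: vec5_eq)
    show ?thesis
    proof (cases "z$3 = z$1")
      case True
      have "proj_eq (vector [1,0,1,0,0]) z" unfolding proj_eq_def
        using nz True \<open>z$2 = 0 \<and> z$4 = 0 \<and> z$5 = 0\<close>
        by (intro exI[of _ "z$1"]) (simp add: vec5_eq)
      then show ?thesis by (simp add: sing_pts_def)
    next
      case False
      then have m: "z$3 = - z$1" using s by simp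
      have "proj_eq (vector [-1,0,1,0,0]) z" unfolding proj_eq_def
        using nz m True
        by (intro exI[of _ "- z$1"]) (simp add: vec5_eq)
      then show ?thesis by (simp add: sing_pts_def)
    qed
  next
    case False
    then have T: "z$1 = 0 \<and> z$3 = 0 \<and> z$5 = 0" using Z by blast
    then have "(z$4)^2 = (z$2)^2" using C(3) by simp
    then have s: "z$4 = z$2 \<or> z$4 = - z$2" by (simp add: power2_eq_iff)
    have nz: "z$2 \<noteq> 0" using C(1) T s by (auto simp: vec5_eq)
    show ?thesis
    proof (cases "z$4 = z$2")
      case True
      have "proj_eq (vector [0,1,0,1,0]) z" unfolding proj_eq_def
        using nz True T
        by (intro exI[of _ "z$2"]) (simp add: vec5_eq)
      then show ?thesis by (simp add: sing_pts_def)
    next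
      case False
      then have m: "z$4 = - z$2" using s by simp
      have "proj_eq (vector [0,-1,0,1,0]) z" unfolding proj_eq_def
        using nz m T
        by (intro exI[of _ "- z$2"]) (simp add: vec5_eq)
      then show ?thesis by (simp add: sing_pts_def)
    qed
  qed
qed

lemma p_to_sing:
  assumes p: "p \<in> set sing_pts" and E: "proj_eq p z"
  shows "singular_pt w z"
proof -
  obtain c where c: "c \<noteq> 0" "z = c *s p" using E unfolding proj_eq_def by blast
  have zc: "z$j = c * p$j" for j using c(2) by simp
  have pc: "p = vector [-1,0,1,0,0] \<or> p = vector [0,-1,0,1,0] \<or> p = vector [0,1,0,1,0] \<or> p = vector [1,0,1,0,0]"
    using p by (simp add: sing_pts_def)
  have cases: "(z$2 = 0 \<and> z$4 = 0 \<and> z$5 = 0 \<and> z$3 = - z$1 \<and> z$1 \<noteq> 0)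
     \<or> (z$2 = 0 \<and> z$4 = 0 \<and> z$5 = 0 \<and> z$3 = z$1 \<and> z$1 \<noteq> 0)
     \<or> (z$1 = 0 \<and> z$3 = 0 \<and> z$5 = 0 \<and> z$4 = - z$2 \<and> z$2 \<noteq> 0)
     \<or> (z$1 = 0 \<and> z$3 = 0 \<and> z$5 = 0 \<and> z$4 = z$2 \<and> z$2 \<noteq> 0)"
    using pc proof (elim disjE)
    assume "p = vector [-1,0,1,0,0]" then show ?thesis using c(1) by (simp add: zc)
  next
    assume "p = vector [0,-1,0,1,0]" then show ?thesis using c(1) by (simp add: zc)
  next
    assume "p = vector [0,1,0,1,0]" then show ?thesis using c(1) by (simp add: zc)
  next
    assume "p = vector [1,0,1,0,0]" then show ?thesis using c(1) by (simp add: zc)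
  qed
  have nz: "z \<noteq> 0" using cases by (auto simp: vec5_eq)
  have H: "z \<in> HCF w" using cases nz
    by (auto simp: HCF_def quadF1_def quadF2_def quadF3_def)
  have "jacHC w z $ 2 = jacHC w z $ 1 \<or> jacHC w z $ 2 = 0"
    using cases by (auto simp: jac_rows vec5_eq)
  then have "rank (jacHC w z) < 3" by (rule rank_le2)
  then show ?thesis using H by (simp add: singular_pt_def)
qed

lemma other_nonsing:
  assumes N: "(w$1)^2 + (w$2)^2 \<noteq> 0 \<or> (w$3)^2 + (w$4)^2 \<noteq> 0"
    and q: "q = vector [0,0,1,s,t]" and s: "s^2 = 1" and t: "t^2 = -1"
  shows "\<not> singular_pt w q"
proof
  assume S: "singular_pt w q"
  then have R: "rank (jacHC w q) < 3" by (simp add: singular_pt_def)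
  obtain a b c where abc: "a \<noteq> 0 \<or> b \<noteq> 0 \<or> c \<noteq> 0"
    and E: "a *s jacHC w q $ 1 + b *s jacHC w q $ 2 + c *s jacHC w q $ 3 = 0"
    using rank_lt3_dep[OF R] by blast
  note E' = jac_comp[OF E]
  have s0: "s \<noteq> 0" using s by auto
  have "a = 0" using E'(4) q s0 by simp
  then have "b = 0" using E'(3) q by simp
  then have cnz: "c \<noteq> 0" using abc \<open>a = 0\<close> by simp
  have e1: "w$4 * t + w$3 * s = 0" using E'(1) q cnz \<open>a = 0\<close> \<open>b = 0\<close> by simp
  have "c * (w$2 * t + w$1) + (a * (2 * q$2) + c * (- w$2 * q$5 - w$1 * q$3 - w$5 * q$1)) = 0"
    using q \<open>a = 0\<close> by (simp add: algebra_simps)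
  then have "c * (w$2 * t + w$1) = 0" unfolding E'(2) by simp
  then have e2: "w$2 * t + w$1 = 0" using cnz by simp
  have "(w$1)^2 = (w$2 * t)^2" using e2 by (simp add: eq_neg_iff_add_eq_0[symmetric])
  then have n1: "(w$1)^2 + (w$2)^2 = 0" using t by (simp add: power_mult_distrib)
  have "(w$3 * s)^2 = (w$4 * t)^2" using e1 by (simp add: eq_neg_iff_add_eq_0[symmetric] add.commute)
  then have n2: "(w$3)^2 + (w$4)^2 = 0" using t s by (simp add: power_mult_distrib)
  show False using N n1 n2 by simp
qed

lemma Dpoly_hom: "hom_poly 12 Dpoly"
proof -
  have v: "hom_poly 2 (\<lambda>w::complex^5. (w$j)^2)" for j by (rule hp_pow2[OF hp_var]) simp
  have N1: "hom_poly 2 (\<lambda>w::complex^5. (w$1)^2 + (w$2)^2)" by (rule hp_add[OF v v])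
  have N2: "hom_poly 2 (\<lambda>w::complex^5. (w$3)^2 + (w$4)^2)" by (rule hp_add[OF v v])
  have l1: "hom_poly 1 (\<lambda>w::complex^5. w$3 - w$5)" by (rule hp_diff[OF hp_var hp_var])
  have l2: "hom_poly 1 (\<lambda>w::complex^5. w$3 + w$5)" by (rule hp_add[OF hp_var hp_var])
  have L1: "hom_poly 2 (\<lambda>w::complex^5. (w$3 - w$5)^2 - (w$1)^2)" by (rule hp_diff[OF hp_pow2[OF l1] v]) simp
  have L2: "hom_poly 2 (\<lambda>w::complex^5. (w$3 + w$5)^2 - (w$1)^2)" by (rule hp_diff[OF hp_pow2[OF l2] v]) simp
  have L: "hom_poly 4 (\<lambda>w::complex^5. ((w$3 - w$5)^2 - (w$1)^2) * ((w$3 + w$5)^2 - (w$1)^2))"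
    by (rule hp_mult[OF L1 L2]) simp
  have I: "hom_poly 2 (\<lambda>w::complex^5. (w$5)^2 - ((w$1)^2 + (w$2)^2) - ((w$3)^2 + (w$4)^2))"
    by (rule hp_diff[OF hp_diff[OF v N1] N2])
  have I2: "hom_poly 4 (\<lambda>w::complex^5. ((w$5)^2 - ((w$1)^2 + (w$2)^2) - ((w$3)^2 + (w$4)^2))^2)"
    by (rule hp_pow2[OF I]) simp
  have P: "hom_poly 4 (\<lambda>w::complex^5. 4 * ((w$1)^2 + (w$2)^2) * ((w$3)^2 + (w$4)^2))"
    using hp_mult[OF hp_smult[OF N1, of 4] N2, of 4] by (simp add: mult.assoc)
  have Dd: "hom_poly 4 (\<lambda>w::complex^5. ((w$5)^2 - ((w$1)^2 + (w$2)^2) - ((w$3)^2 + (w$4)^2))^2 - 4 * ((w$1)^2 + (w$2)^2) * ((w$3)^2 + (w$4)^2))"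
    by (rule hp_diff[OF I2 P])
  have "hom_poly 12 (\<lambda>w. ((w$1)^2 + (w$2)^2) * ((w$3)^2 + (w$4)^2)
     * (((w$3 - w$5)^2 - (w$1)^2) * ((w$3 + w$5)^2 - (w$1)^2))
     * (((w$5)^2 - ((w$1)^2 + (w$2)^2) - ((w$3)^2 + (w$4)^2))^2 - 4 * ((w$1)^2 + (w$2)^2) * ((w$3)^2 + (w$4)^2)))"
    by (rule hp_mult[OF hp_mult[OF hp_mult[OF N1 N2] L] Dd]) simp_all
  then show ?thesis unfolding Dpoly_def[abs_def] .
qed

theorem lemma5p5:
  shows "(\<forall>w::complex^5. w \<noteq> 0 \<longrightarrow> (\<forall>p\<in>set sing_pts. singular_pt w p))
    \<and> (\<forall>w::complex^5. w \<noteq> 0 \<longrightarrow> ((w$1)^2 + (w$2)^2 \<noteq> 0 \<or> (w$3)^2 + (w$4)^2 \<noteq> 0) \<longrightarrow>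
          (\<forall>q\<in>set other_pts. \<not> singular_pt w q))
    \<and> generic_param (\<lambda>w. (\<forall>z. singular_pt w z \<longleftrightarrow> (\<exists>p\<in>set sing_pts. proj_eq p z))
                         \<and> ((w$1)^2 + (w$2)^2 \<noteq> 0 \<or> (w$3)^2 + (w$4)^2 \<noteq> 0))"
proof (intro conjI allI impI ballI)
  fix w :: "complex^5" and p assume "p \<in> set sing_pts"
  moreover have "proj_eq p p" unfolding proj_eq_def by (intro exI[of _ 1]) simp
  ultimately show "singular_pt w p" by (rule p_to_sing)
next
  fix w :: "complex^5" and q
  assume N: "(w$1)^2 + (w$2)^2 \<noteq> 0 \<or> (w$3)^2 + (w$4)^2 \<noteq> 0" and q: "q \<in> set other_pts"
  have ii: "\<i>^2 = -1" "(-\<i>)^2 = -1" by (simp_all add: power2_eq_square)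
  from q show "\<not> singular_pt w q" unfolding other_pts_def
    using other_nonsing[OF N _ _ ii(1)] other_nonsing[OF N _ _ ii(2)] by auto
next
  show "generic_param (\<lambda>w. (\<forall>z. singular_pt w z \<longleftrightarrow> (\<exists>p\<in>set sing_pts. proj_eq p z))
                         \<and> ((w$1)^2 + (w$2)^2 \<noteq> 0 \<or> (w$3)^2 + (w$4)^2 \<noteq> 0))"
    unfolding generic_param_def
  proof (rule exI[of _ "{Dpoly}"], intro conjI)
    show "finite {Dpoly}" by simp
    show "\<forall>p\<in>{Dpoly}. \<exists>k. hom_poly k p" using Dpoly_hom by auto
    let ?w0 = "vector [1,0,1,0,5] :: complex^5"
    have "Dpoly ?w0 \<noteq> 0" by (simp add: Dpoly_def)
    moreover have "?w0 \<noteq> 0" by (simp add: vec5_eq)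
    ultimately show "\<exists>w. w \<noteq> 0 \<and> (\<exists>p\<in>{Dpoly}. p w \<noteq> 0)" by blast
    show "\<forall>w. w \<noteq> 0 \<and> (\<exists>p\<in>{Dpoly}. p w \<noteq> 0) \<longrightarrow>
      (\<forall>z. singular_pt w z \<longleftrightarrow> (\<exists>p\<in>set sing_pts. proj_eq p z))
       \<and> ((w$1)^2 + (w$2)^2 \<noteq> 0 \<or> (w$3)^2 + (w$4)^2 \<noteq> 0)"
    proof (intro allI impI conjI iffI)
      fix w :: "complex^5" assume "w \<noteq> 0 \<and> (\<exists>p\<in>{Dpoly}. p w \<noteq> 0)"
      then have D: "Dpoly w \<noteq> 0" by simp
      then show "(w$1)^2 + (w$2)^2 \<noteq> 0 \<or> (w$3)^2 + (w$4)^2 \<noteq> 0" by (auto simp: Dpoly_def)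
      fix z
      { assume S: "singular_pt w z"
        then have H: "z \<in> HCF w" by (simp add: singular_pt_def)
        show "\<exists>p\<in>set sing_pts. proj_eq p z" by (rule p_of[OF H sing_to_p[OF S D]]) }
      { assume "\<exists>p\<in>set sing_pts. proj_eq p z"
        then show "singular_pt w z" using p_to_sing by blast }
    qed
  qed
qed


end
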